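(* Let $\mathcal X$ and $\mathcal Y$ be polytopes with $p$ and $q$ vertices respectively, and let $\mathcal L(x,y)=x^\top My$ for a matrix $M$. Then the SP-FW algorithm with step size $\gamma_t=\frac1{t+1}$ satisfies $h(z^{(t)})=O\big(t^{-\frac1{p+q-2}}\big)$.
   Context: SP-FW algorithm: start from $z^{(0)}\in\mathcal X\times\mathcal Y$; at iteration $t$ compute $r^{(t)}:=(\nabla_x\mathcal L(z^{(t)}),-\nabla_y\mathcal L(z^{(t)}))$, $s^{(t)}\in\arg\min_{s\in\mathcal X\times\mathcal Y}\langle s,r^{(t)}\rangle$, and set $z^{(t+1)}:=(1-\gamma_t)z^{(t)}+\gamma_ts^{(t)}$. For $z=(x,y)$, $h(z):=\max_{y'\in\mathcal Y}\mathcal L(x,y')-\min_{x'\in\mathcal X}\mathcal L(x',y)$. *)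

theory Defs
  imports "HOL-Analysis.Analysis" "HOL-Library.Landau_Symbols"
begin

definition bilin :: "real^'m^'n \<Rightarrow> real^'n \<Rightarrow> real^'m \<Rightarrow> real" where
  "bilin M x y = x \<bullet> (M *v y)"

definition dgap :: "real^'m^'n \<Rightarrow> (real^'n) set \<Rightarrow> (real^'m) set
                    \<Rightarrow> (real^'n) \<times> (real^'m) \<Rightarrow> real" where
  "dgap M X Y z = (SUP y'\<in>Y. bilin M (fst z) y') - (INF x'\<in>X. bilin M x' (snd z))"

text \<open>Gradient field r(z) = (grad_x L(z), - grad_y L(z)) for the bilinear L.\<close>
definition spfw_r :: "real^'m^'n \<Rightarrow> (real^'n) \<times> (real^'m) \<Rightarrow> (real^'n) \<times> (real^'m)" where
  "spfw_r M z = (M *v snd z, - (transpose M *v fst z))"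

end

theory Submission
  imports Defs
begin


lemma Min_uminus: "finite S \<Longrightarrow> S \<noteq> {} \<Longrightarrow> Min ((\<lambda>x. - f x) ` S) = - Max (f ` (S::'a set))"
  for f :: "'a \<Rightarrow> real"
proof -
  assume S: "finite S" "S \<noteq> {}"
  have "Max (f`S) \<in> f ` S" using S by (intro Max_in) auto
  then obtain x where x: "x \<in> S" "Max (f ` S) = f x" by blast
  show ?thesis
  proof (rule Min_eqI)
    show "finite ((\<lambda>x. - f x) ` S)" using S by simp
    show "\<And>y. y \<in> (\<lambda>x. - f x) ` S \<Longrightarrow> - Max (f ` S) \<le> y" using S by auto
    show "- Max (f ` S) \<in> (\<lambda>x. - f x) ` S" using x by auto
  qed
qed

lemma Max_uminus: "finite S \<Longrightarrow> S \<noteq> {} \<Longrightarrow> Max ((\<lambda>x. - f x) ` S) = - Min (f ` (S::'a set))"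
  for f :: "'a \<Rightarrow> real"
proof -
  assume S: "finite S" "S \<noteq> {}"
  have "Min (f`S) \<in> f ` S" using S by (intro Min_in) auto
  then obtain x where x: "x \<in> S" "Min (f ` S) = f x" by blast
  show ?thesis
  proof (rule Max_eqI)
    show "finite ((\<lambda>x. - f x) ` S)" using S by simp
    show "\<And>y. y \<in> (\<lambda>x. - f x) ` S \<Longrightarrow> y \<le> - Min (f ` S)" using S by auto
    show "- Min (f ` S) \<in> (\<lambda>x. - f x) ` S" using x by auto
  qed
qed


definition sysT :: "nat \<Rightarrow> 'a set \<Rightarrow> 'a set \<Rightarrow> ('a \<Rightarrow> 'a \<Rightarrow> real) \<Rightarrow> (nat \<Rightarrow> 'a \<Rightarrow> real)
   \<Rightarrow> (nat \<Rightarrow> 'a \<Rightarrow> real) \<Rightarrow> (nat \<Rightarrow> 'a \<Rightarrow> real) \<Rightarrow> (nat \<Rightarrow> 'a \<Rightarrow> real) \<Rightarrow> bool" where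
 "sysT T I J a G F lam mu \<longleftrightarrow> (\<forall>t<T.
    (\<forall>i\<in>I. lam t i \<ge> 0) \<and> sum (lam t) I = 1 \<and> (\<forall>i\<in>I. lam t i \<noteq> 0 \<longrightarrow> G t i = Min (G t ` I)) \<and>
    (\<forall>j\<in>J. mu t j \<ge> 0) \<and> sum (mu t) J = 1 \<and> (\<forall>j\<in>J. mu t j \<noteq> 0 \<longrightarrow> F t j = Max (F t ` J)) \<and>
    (\<forall>j\<in>J. F (Suc t) j = F t j + (\<Sum>i\<in>I. lam t i * a i j)) \<and>
    (\<forall>i\<in>I. G (Suc t) i = G t i + (\<Sum>j\<in>J. mu t j * a i j)))"

definition gp :: "'a set \<Rightarrow> 'a set \<Rightarrow> (nat \<Rightarrow> 'a \<Rightarrow> real) \<Rightarrow> (nat \<Rightarrow> 'a \<Rightarrow> real) \<Rightarrow> nat \<Rightarrow> real" where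
  "gp I J G F t = Max (F t ` J) - Min (G t ` I)"

lemma sysT_D:
  assumes "sysT T I J a G F lam mu" "t < T"
  shows "\<And>i. i\<in>I \<Longrightarrow> lam t i \<ge> 0" "sum (lam t) I = 1"
    "\<And>i. i\<in>I \<Longrightarrow> lam t i \<noteq> 0 \<Longrightarrow> G t i = Min (G t ` I)"
    "\<And>j. j\<in>J \<Longrightarrow> mu t j \<ge> 0" "sum (mu t) J = 1"
    "\<And>j. j\<in>J \<Longrightarrow> mu t j \<noteq> 0 \<Longrightarrow> F t j = Max (F t ` J)"
    "\<And>j. j\<in>J \<Longrightarrow> F (Suc t) j = F t j + (\<Sum>i\<in>I. lam t i * a i j)"
    "\<And>i. i\<in>I \<Longrightarrow> G (Suc t) i = G t i + (\<Sum>j\<in>J. mu t j * a i j)"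
  using assms unfolding sysT_def by blast+

lemma sysT_transpose:
  assumes S: "sysT T I J a G F lam mu" and fin: "finite I" "finite J" "I \<noteq> {}" "J \<noteq> {}"
  shows "sysT T J I (\<lambda>x y. - a y x) (\<lambda>t j. - F t j) (\<lambda>t i. - G t i) mu lam"
  unfolding sysT_def
proof (intro allI impI)
  fix t assume t: "t < T"
  note D = sysT_D[OF S t]
  have m1: "Min ((\<lambda>j. - F t j) ` J) = - Max (F t ` J)" by (rule Min_uminus[OF fin(2) fin(4)])
  have m2: "Max ((\<lambda>i. - G t i) ` I) = - Min (G t ` I)" by (rule Max_uminus[OF fin(1) fin(3)])
  show "(\<forall>i\<in>J. 0 \<le> mu t i) \<and> sum (mu t) J = 1 \<and>
     (\<forall>i\<in>J. mu t i \<noteq> 0 \<longrightarrow> - F t i = Min ((\<lambda>j. - F t j) ` J)) \<and>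
     (\<forall>j\<in>I. 0 \<le> lam t j) \<and> sum (lam t) I = 1 \<and>
     (\<forall>j\<in>I. lam t j \<noteq> 0 \<longrightarrow> - G t j = Max ((\<lambda>i. - G t i) ` I)) \<and>
     (\<forall>j\<in>I. - G (Suc t) j = - G t j + (\<Sum>i\<in>J. mu t i * - a j i)) \<and>
     (\<forall>i\<in>J. - F (Suc t) i = - F t i + (\<Sum>j\<in>I. lam t j * - a j i))"
    unfolding m1 m2
  proof (intro conjI ballI impI)
    show "\<And>j. j \<in> J \<Longrightarrow> 0 \<le> mu t j" by (rule D(4))
    show "sum (mu t) J = 1" by (rule D(5))
    show "\<And>j. j \<in> J \<Longrightarrow> mu t j \<noteq> 0 \<Longrightarrow> - F t j = - Max (F t ` J)" using D(6) by metis
    show "\<And>j. j \<in> I \<Longrightarrow> 0 \<le> lam t j" by (rule D(1))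
    show "sum (lam t) I = 1" by (rule D(2))
    show "\<And>j. j \<in> I \<Longrightarrow> lam t j \<noteq> 0 \<Longrightarrow> - G t j = - Min (G t ` I)" using D(3) by metis
    show "\<And>j. j \<in> I \<Longrightarrow> - G (Suc t) j = - G t j + (\<Sum>i\<in>J. mu t i * - a j i)"
      using D(8) by (simp add: sum_negf)
    show "\<And>j. j \<in> J \<Longrightarrow> - F (Suc t) j = - F t j + (\<Sum>i\<in>I. lam t i * - a i j)"
      using D(7) by (simp add: sum_negf)
  qed
qed

lemma gp_transpose:
  assumes "finite I" "finite J" "I \<noteq> {}" "J \<noteq> {}"
  shows "gp J I (\<lambda>t j. - F t j) (\<lambda>t i. - G t i) t = gp I J G F t"
proof -
  have "Max ((\<lambda>i. - G t i) ` I) = - Min (G t ` I)" by (rule Max_uminus[OF assms(1,3)])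
  moreover have "Min ((\<lambda>j. - F t j) ` J) = - Max (F t ` J)" by (rule Min_uminus[OF assms(2,4)])
  ultimately show ?thesis unfolding gp_def by linarith
qed

lemma wsum_le_Max:
  fixes w f :: "'a \<Rightarrow> real"
  assumes "finite S" "\<And>x. x\<in>S \<Longrightarrow> w x \<ge> 0"
  shows "(\<Sum>x\<in>S. w x * f x) \<le> sum w S * Max (f ` S)"
proof -
  have "(\<Sum>x\<in>S. w x * f x) \<le> (\<Sum>x\<in>S. w x * Max (f ` S))"
  proof (rule sum_mono)
    fix x assume "x \<in> S"
    then show "w x * f x \<le> w x * Max (f ` S)" using assms by (intro mult_left_mono) auto
  qed
  then show ?thesis by (simp add: sum_distrib_right)
qed

lemma wsum_ge_Min:
  fixes w f :: "'a \<Rightarrow> real"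
  assumes "finite S" "\<And>x. x\<in>S \<Longrightarrow> w x \<ge> 0"
  shows "(\<Sum>x\<in>S. w x * f x) \<ge> sum w S * Min (f ` S)"
proof -
  have "(\<Sum>x\<in>S. w x * f x) \<ge> (\<Sum>x\<in>S. w x * Min (f ` S))"
  proof (rule sum_mono)
    fix x assume "x \<in> S"
    then show "w x * f x \<ge> w x * Min (f ` S)" using assms by (intro mult_left_mono) auto
  qed
  then show ?thesis by (simp add: sum_distrib_right)
qed

lemma wsum_abs_le:
  fixes w f :: "'a \<Rightarrow> real"
  assumes "finite S" "\<And>x. x\<in>S \<Longrightarrow> w x \<ge> 0" "sum w S = 1" "\<And>x. x\<in>S \<Longrightarrow> \<bar>f x\<bar> \<le> A"
  shows "\<bar>\<Sum>x\<in>S. w x * f x\<bar> \<le> A"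
proof -
  have "\<bar>\<Sum>x\<in>S. w x * f x\<bar> \<le> (\<Sum>x\<in>S. \<bar>w x * f x\<bar>)" by (rule sum_abs)
  also have "\<dots> \<le> (\<Sum>x\<in>S. w x * A)"
  proof (rule sum_mono)
    fix x assume "x \<in> S"
    then show "\<bar>w x * f x\<bar> \<le> w x * A" using assms by (simp add: abs_mult mult_left_mono)
  qed
  also have "\<dots> = sum w S * A" by (rule sum_distrib_right[symmetric])
  also have "\<dots> = A" using assms by simp
  finally show ?thesis .
qed

lemma Min_close:
  fixes g h :: "'a \<Rightarrow> real"
  assumes "finite S" "S \<noteq> {}" "\<And>x. x \<in> S \<Longrightarrow> \<bar>g x - h x\<bar> \<le> c"
  shows "Min (g ` S) \<ge> Min (h ` S) - c"
proof -
  have "Min (g`S) \<in> g ` S" using assms by (intro Min_in) auto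
  then obtain x where x: "x \<in> S" "Min (g ` S) = g x" by blast
  have "Min (h ` S) \<le> h x" using x assms by (intro Min_le) auto
  then show ?thesis using assms(3)[OF x(1)] x by linarith
qed

lemma Max_close:
  fixes g h :: "'a \<Rightarrow> real"
  assumes "finite S" "S \<noteq> {}" "\<And>x. x \<in> S \<Longrightarrow> \<bar>g x - h x\<bar> \<le> c"
  shows "Max (g ` S) \<le> Max (h ` S) + c"
proof -
  have "Max (g`S) \<in> g ` S" using assms by (intro Max_in) auto
  then obtain x where x: "x \<in> S" "Max (g ` S) = g x" by blast
  have "Max (h ` S) \<ge> h x" using x assms by (intro Max_ge) auto
  then show ?thesis using assms(3)[OF x(1)] x by linarith
qed

lemma Min_le_Max:
  fixes g h :: "'a \<Rightarrow> real"
  assumes "finite S" "S \<noteq> {}"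
  shows "Min (g ` S) \<le> Max (g ` S)"
proof -
  obtain x where "x \<in> S" using assms by auto
  then have "Min (g ` S) \<le> g x" "g x \<le> Max (g ` S)" using assms by (auto intro: Min_le Max_ge)
  then show ?thesis by linarith
qed

lemma A_nonneg:
  assumes "I \<noteq> {}" "J \<noteq> {}" "\<forall>i\<in>I. \<forall>j\<in>J. \<bar>a i j\<bar> \<le> (A::real)"
  shows "0 \<le> A"
proof -
  obtain i j where "i \<in> I" "j \<in> J" using assms by auto
  then have "\<bar>a i j\<bar> \<le> A" using assms by auto
  then show ?thesis by linarith
qed

lemma step_G:
  assumes S: "sysT T I J a G F lam mu" and fin: "finite J"
    and A: "\<forall>i\<in>I. \<forall>j\<in>J. \<bar>a i j\<bar> \<le> A" and t: "t < T" and i: "i \<in> I"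
  shows "\<bar>G (Suc t) i - G t i\<bar> \<le> A"
proof -
  have "G (Suc t) i - G t i = (\<Sum>j\<in>J. mu t j * a i j)" using sysT_D(8)[OF S t i] by simp
  also have "\<bar>\<dots>\<bar> \<le> A"
    using sysT_D[OF S t] A i fin by (intro wsum_abs_le) auto
  finally show ?thesis .
qed

lemma steps_G:
  assumes S: "sysT T I J a G F lam mu" and fin: "finite J"
    and A: "\<forall>i\<in>I. \<forall>j\<in>J. \<bar>a i j\<bar> \<le> A" and i: "i \<in> I"
  shows "u + k \<le> T \<Longrightarrow> \<bar>G (u + k) i - G u i\<bar> \<le> real k * A"
proof (induction k)
  case 0 then show ?case by simp
next
  case (Suc k)
  have "\<bar>G (Suc (u + k)) i - G (u + k) i\<bar> \<le> A" using Suc.prems by (intro step_G[OF S fin A _ i]) simp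
  moreover have "\<bar>G (u + k) i - G u i\<bar> \<le> real k * A" using Suc by simp
  ultimately show ?case by (simp add: algebra_simps)
qed

lemma steps_F:
  assumes S: "sysT T I J a G F lam mu" and fin: "finite I" "finite J" "I \<noteq> {}" "J \<noteq> {}"
    and A: "\<forall>i\<in>I. \<forall>j\<in>J. \<bar>a i j\<bar> \<le> A" and j: "j \<in> J" and uk: "u + k \<le> T"
  shows "\<bar>F (u + k) j - F u j\<bar> \<le> real k * A"
proof -
  have A': "\<forall>i\<in>J. \<forall>j\<in>I. \<bar>- a j i\<bar> \<le> A" using A by auto
  have "\<bar>- F (u + k) j - - F u j\<bar> \<le> real k * A"
    using steps_G[OF sysT_transpose[OF S fin] fin(1) A' j uk] .
  then show ?thesis by linarith
qed

lemma gp_grow: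
  assumes S: "sysT T I J a G F lam mu" and fin: "finite I" "finite J" "I \<noteq> {}" "J \<noteq> {}"
    and A: "\<forall>i\<in>I. \<forall>j\<in>J. \<bar>a i j\<bar> \<le> A" and uk: "u + k \<le> T"
  shows "gp I J G F (u + k) \<le> gp I J G F u + 2 * real k * A"
proof -
  have "Max (F (u+k) ` J) \<le> Max (F u ` J) + real k * A"
    using steps_F[OF S fin A _ uk] fin by (intro Max_close) auto
  moreover have "Min (G (u+k) ` I) \<ge> Min (G u ` I) - real k * A"
    using steps_G[OF S fin(2) A _ uk] fin by (intro Min_close) auto
  ultimately show ?thesis unfolding gp_def by linarith
qed



lemma spread_G:
  assumes S: "sysT T I J a G F lam mu" and fin: "finite I" "finite J" "I \<noteq> {}" "J \<noteq> {}"
    and A: "\<forall>i\<in>I. \<forall>j\<in>J. \<bar>a i j\<bar> \<le> A" and sL: "s + L \<le> T"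
    and elig: "\<forall>i\<in>I. \<exists>u. s \<le> u \<and> u \<le> s + L \<and> G u i = Min (G u ` I)"
  shows "Max (G (s+L) ` I) - Min (G (s+L) ` I) \<le> 2 * real L * A"
proof -
  have A0: "0 \<le> A" using A_nonneg[OF fin(3,4) A] .
  have "\<forall>i\<in>I. G (s+L) i \<le> Min (G (s+L) ` I) + 2 * real L * A"
  proof
    fix i assume i: "i \<in> I"
    obtain u where u: "s \<le> u" "u \<le> s + L" "G u i = Min (G u ` I)" using elig i by blast
    define k where "k = s + L - u"
    have uk: "u + k = s + L" using u unfolding k_def by simp
    have kL: "real k \<le> real L" using u unfolding k_def by simp
    have "\<bar>G (u + k) i - G u i\<bar> \<le> real k * A"
      using steps_G[OF S fin(2) A i, of u k] uk sL by simp
    moreover have "Min (G (u + k) ` I) \<ge> Min (G u ` I) - real k * A"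
    proof (rule Min_close[OF fin(1,3)])
      fix x assume "x \<in> I"
      from steps_G[OF S fin(2) A this, of u k] uk sL show "\<bar>G (u + k) x - G u x\<bar> \<le> real k * A" by simp
    qed
    moreover have "real k * A \<le> real L * A" using kL A0 by (rule mult_right_mono)
    ultimately show "G (s+L) i \<le> Min (G (s+L) ` I) + 2 * real L * A"
      using u(3) uk by (simp add: abs_le_iff) 
  qed
  then have "Max (G (s+L) ` I) \<le> Min (G (s+L) ` I) + 2 * real L * A"
    using fin by (intro Max.boundedI) auto
  then show ?thesis by linarith
qed

lemma spread_F:
  assumes S: "sysT T I J a G F lam mu" and fin: "finite I" "finite J" "I \<noteq> {}" "J \<noteq> {}"
    and A: "\<forall>i\<in>I. \<forall>j\<in>J. \<bar>a i j\<bar> \<le> A" and sL: "s + L \<le> T"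
    and elig: "\<forall>j\<in>J. \<exists>u. s \<le> u \<and> u \<le> s + L \<and> F u j = Max (F u ` J)"
  shows "Max (F (s+L) ` J) - Min (F (s+L) ` J) \<le> 2 * real L * A"
proof -
  have A': "\<forall>i\<in>J. \<forall>j\<in>I. \<bar>- a j i\<bar> \<le> A" using A by auto
  have elig': "\<forall>j\<in>J. \<exists>u. s \<le> u \<and> u \<le> s + L \<and> - F u j = Min ((\<lambda>j. - F u j) ` J)"
  proof
    fix j assume "j \<in> J"
    then obtain u where "s \<le> u \<and> u \<le> s + L \<and> F u j = Max (F u ` J)" using elig by blast
    moreover have "Min ((\<lambda>j. - F u j) ` J) = - Max (F u ` J)" by (rule Min_uminus[OF fin(2,4)])
    ultimately show "\<exists>u. s \<le> u \<and> u \<le> s + L \<and> - F u j = Min ((\<lambda>j. - F u j) ` J)" by auto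
  qed
  have "Max ((\<lambda>j. - F (s+L) j) ` J) - Min ((\<lambda>j. - F (s+L) j) ` J) \<le> 2 * real L * A"
    using spread_G[OF sysT_transpose[OF S fin] fin(2,1,4,3) A' sL elig'] .
  moreover have "Min ((\<lambda>j. - F (s+L) j) ` J) = - Max (F (s+L) ` J)" by (rule Min_uminus[OF fin(2,4)])
  moreover have "Max ((\<lambda>j. - F (s+L) j) ` J) = - Min (F (s+L) ` J)" by (rule Max_uminus[OF fin(2,4)])
  ultimately show ?thesis by linarith
qed

lemma closed_G:
  assumes S: "sysT T I J a G F lam mu" and i: "i \<in> I"
  shows "t \<le> T \<Longrightarrow> G t i = G 0 i + (\<Sum>j\<in>J. (\<Sum>k<t. mu k j) * a i j)"
proof (induction t)
  case 0 then show ?case by simp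
next
  case (Suc t)
  have "G (Suc t) i = G t i + (\<Sum>j\<in>J. mu t j * a i j)" using sysT_D(8)[OF S _ i] Suc.prems by simp
  also have "\<dots> = G 0 i + (\<Sum>j\<in>J. (\<Sum>k<t. mu k j) * a i j + mu t j * a i j)"
    using Suc by (simp add: sum.distrib)
  also have "\<dots> = G 0 i + (\<Sum>j\<in>J. (\<Sum>k<Suc t. mu k j) * a i j)"
    by (simp add: distrib_right)
  finally show ?case .
qed

lemma closed_F:
  assumes S: "sysT T I J a G F lam mu" and j: "j \<in> J"
  shows "t \<le> T \<Longrightarrow> F t j = F 0 j + (\<Sum>i\<in>I. (\<Sum>k<t. lam k i) * a i j)"
proof (induction t)
  case 0 then show ?case by simp
next
  case (Suc t)
  have "F (Suc t) j = F t j + (\<Sum>i\<in>I. lam t i * a i j)" using sysT_D(7)[OF S _ j] Suc.prems by simp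
  also have "\<dots> = F 0 j + (\<Sum>i\<in>I. (\<Sum>k<t. lam k i) * a i j + lam t i * a i j)"
    using Suc by (simp add: sum.distrib)
  also have "\<dots> = F 0 j + (\<Sum>i\<in>I. (\<Sum>k<Suc t. lam k i) * a i j)"
    by (simp add: distrib_right)
  finally show ?case .
qed

lemma minF_le_maxG:
  assumes S: "sysT T I J a G F lam mu" and fin: "finite I" "finite J" "I \<noteq> {}" "J \<noteq> {}"
    and tT: "t \<le> T" and g0: "gp I J G F 0 \<le> 0"
  shows "Min (F t ` J) \<le> Max (G t ` I)"
proof (cases "t = 0")
  case True
  have "Min (F 0 ` J) \<le> Max (F 0 ` J)" using fin by (intro Min_le_Max) auto
  moreover have "Min (G 0 ` I) \<le> Max (G 0 ` I)" using fin by (intro Min_le_Max) auto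
  ultimately show ?thesis using g0 unfolding gp_def True by linarith
next
  case False
  define Lm where "Lm i = (\<Sum>k<t. lam k i)" for i
  define Mu where "Mu j = (\<Sum>k<t. mu k j)" for j
  have Lm0: "\<And>i. i \<in> I \<Longrightarrow> Lm i \<ge> 0" unfolding Lm_def using sysT_D(1)[OF S] tT
    by (intro sum_nonneg) auto
  have Mu0: "\<And>j. j \<in> J \<Longrightarrow> Mu j \<ge> 0" unfolding Mu_def using sysT_D(4)[OF S] tT
    by (intro sum_nonneg) auto
  have sLm: "sum Lm I = real t"
  proof -
    have "sum Lm I = (\<Sum>k<t. sum (lam k) I)" unfolding Lm_def by (rule sum.swap)
    also have "\<dots> = (\<Sum>k<t. 1)" using sysT_D(2)[OF S] tT by (intro sum.cong) auto
    finally show ?thesis by simp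
  qed
  have sMu: "sum Mu J = real t"
  proof -
    have "sum Mu J = (\<Sum>k<t. sum (mu k) J)" unfolding Mu_def by (rule sum.swap)
    also have "\<dots> = (\<Sum>k<t. 1)" using sysT_D(5)[OF S] tT by (intro sum.cong) auto
    finally show ?thesis by simp
  qed
  have eG: "\<And>i. i \<in> I \<Longrightarrow> G t i = G 0 i + (\<Sum>j\<in>J. Mu j * a i j)"
    unfolding Mu_def using closed_G[OF S _ tT] by blast
  have eF: "\<And>j. j \<in> J \<Longrightarrow> F t j = F 0 j + (\<Sum>i\<in>I. Lm i * a i j)"
    unfolding Lm_def using closed_F[OF S _ tT] by blast
  have "(\<Sum>i\<in>I. Lm i * G t i) = (\<Sum>i\<in>I. Lm i * G 0 i) + (\<Sum>i\<in>I. \<Sum>j\<in>J. Lm i * (Mu j * a i j))"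
    using eG by (simp add: distrib_left sum.distrib sum_distrib_left)
  moreover have "(\<Sum>j\<in>J. Mu j * F t j) = (\<Sum>j\<in>J. Mu j * F 0 j) + (\<Sum>j\<in>J. \<Sum>i\<in>I. Mu j * (Lm i * a i j))"
    using eF by (simp add: distrib_left sum.distrib sum_distrib_left)
  moreover have "(\<Sum>i\<in>I. \<Sum>j\<in>J. Lm i * (Mu j * a i j)) = (\<Sum>j\<in>J. \<Sum>i\<in>I. Mu j * (Lm i * a i j))"
    by (subst sum.swap) (simp add: ac_simps)
  ultimately have key: "(\<Sum>j\<in>J. Mu j * F t j) - (\<Sum>i\<in>I. Lm i * G t i)
     = (\<Sum>j\<in>J. Mu j * F 0 j) - (\<Sum>i\<in>I. Lm i * G 0 i)" by linarith
  have "(\<Sum>j\<in>J. Mu j * F t j) \<ge> real t * Min (F t ` J)" using wsum_ge_Min[where w=Mu and f="F t", OF fin(2) Mu0] by (simp only: sMu)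
  moreover have "(\<Sum>i\<in>I. Lm i * G t i) \<le> real t * Max (G t ` I)" using wsum_le_Max[where w=Lm and f="G t", OF fin(1) Lm0] by (simp only: sLm)
  moreover have "(\<Sum>j\<in>J. Mu j * F 0 j) \<le> real t * Max (F 0 ` J)" using wsum_le_Max[where w=Mu and f="F 0", OF fin(2) Mu0] by (simp only: sMu)
  moreover have "(\<Sum>i\<in>I. Lm i * G 0 i) \<ge> real t * Min (G 0 ` I)" using wsum_ge_Min[where w=Lm and f="G 0", OF fin(1) Lm0] by (simp only: sLm)
  ultimately have "real t * (Min (F t ` J) - Max (G t ` I)) \<le> real t * (Max (F 0 ` J) - Min (G 0 ` I))"
    using key by (simp add: algebra_simps)
  also have "\<dots> \<le> 0" using g0 unfolding gp_def by (simp add: mult_nonneg_nonpos)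
  finally have "real t * (Min (F t ` J) - Max (G t ` I)) \<le> 0" .
  then show ?thesis using False by (simp add: mult_le_0_iff)
qed

lemma all_elig:
  assumes S: "sysT T I J a G F lam mu" and fin: "finite I" "finite J" "I \<noteq> {}" "J \<noteq> {}"
    and A: "\<forall>i\<in>I. \<forall>j\<in>J. \<bar>a i j\<bar> \<le> A" and sL: "s + L \<le> T" and g0: "gp I J G F 0 \<le> 0"
    and eligG: "\<forall>i\<in>I. \<exists>u. s \<le> u \<and> u \<le> s + L \<and> G u i = Min (G u ` I)"
    and eligF: "\<forall>j\<in>J. \<exists>u. s \<le> u \<and> u \<le> s + L \<and> F u j = Max (F u ` J)"
  shows "gp I J G F (s+L) \<le> 4 * real L * A"
proof -
  have "Max (G (s+L) ` I) - Min (G (s+L) ` I) \<le> 2 * real L * A" by (rule spread_G[OF S fin A sL eligG])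
  moreover have "Max (F (s+L) ` J) - Min (F (s+L) ` J) \<le> 2 * real L * A" by (rule spread_F[OF S fin A sL eligF])
  moreover have "Min (F (s+L) ` J) \<le> Max (G (s+L) ` I)" by (rule minF_le_maxG[OF S fin sL g0])
  ultimately show ?thesis unfolding gp_def by linarith
qed

lemma Min_remove:
  fixes g :: "'a \<Rightarrow> real"
  assumes "finite I" "i0 \<in> I" "g i0 \<noteq> Min (g ` I)"
  shows "Min (g ` (I - {i0})) = Min (g ` I)"
proof -
  have ne: "I \<noteq> {}" using assms by auto
  have "Min (g`I) \<in> g ` I" using assms ne by (intro Min_in) auto
  then obtain i1 where i1: "i1 \<in> I" "Min (g ` I) = g i1" by blast
  have i1': "i1 \<in> I - {i0}" using i1 assms(3) by auto
  have "Min (g ` (I - {i0})) \<le> g i1" using i1' assms by (intro Min_le) auto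
  moreover have "Min (g ` (I - {i0})) \<ge> Min (g ` I)"
    using i1' assms by (intro Min_antimono) auto
  ultimately show ?thesis using i1 by linarith
qed

lemma Min_add_const:
  fixes g :: "'a \<Rightarrow> real"
  assumes "finite I" "I \<noteq> {}"
  shows "Min ((\<lambda>i. g i + c) ` I) = Min (g ` I) + c"
proof -
  have "Min (g`I) \<in> g ` I" using assms by (intro Min_in) auto
  then obtain i1 where i1: "i1 \<in> I" "Min (g ` I) = g i1" by blast
  show ?thesis
  proof (rule Min_eqI)
    show "finite ((\<lambda>i. g i + c) ` I)" using assms by simp
    show "\<And>y. y \<in> (\<lambda>i. g i + c) ` I \<Longrightarrow> Min (g ` I) + c \<le> y" using assms by auto
    show "Min (g ` I) + c \<in> (\<lambda>i. g i + c) ` I" using i1 by auto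
  qed
qed

lemma remove_row:
  fixes B :: "nat \<Rightarrow> real"
  assumes H: "\<And>(I'::'a set) J' a' T' G' F' lam' mu' t'. finite I' \<Longrightarrow> finite J' \<Longrightarrow> I' \<noteq> {} \<Longrightarrow> J' \<noteq> {}
       \<Longrightarrow> card I' + card J' = N' \<Longrightarrow> (\<forall>i\<in>I'. \<forall>j\<in>J'. \<bar>a' i j\<bar> \<le> A)
       \<Longrightarrow> sysT T' I' J' a' G' F' lam' mu' \<Longrightarrow> gp I' J' G' F' 0 \<le> 0 \<Longrightarrow> 1 \<le> t' \<Longrightarrow> t' < T'
       \<Longrightarrow> gp I' J' G' F' t' \<le> B t'"
    and S: "sysT T (I::'a set) J a G F lam mu" and fin: "finite I" "finite J" "I \<noteq> {}" "J \<noteq> {}"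
    and card: "card I + card J = Suc N'" "2 \<le> card I" and i0: "i0 \<in> I"
    and A: "\<forall>i\<in>I. \<forall>j\<in>J. \<bar>a i j\<bar> \<le> A"
    and noel: "\<forall>u. s \<le> u \<and> u \<le> s + L \<longrightarrow> G u i0 \<noteq> Min (G u ` I)"
    and L1: "1 \<le> L" and sL: "s + L < T"
  shows "gp I J G F (s+L) \<le> gp I J G F s + B L"
proof -
  define I' where "I' = I - {i0}"
  define c where "c = gp I J G F s"
  define G' where "G' u i = G (s+u) i + c" for u i
  have finI': "finite I'" using fin unfolding I'_def by simp
  have cI': "card I' = card I - 1" unfolding I'_def using fin i0 by simp
  have neI': "I' \<noteq> {}" using cI' card by auto
  have MinI': "\<And>u. u \<le> L \<Longrightarrow> Min (G' u ` I') = Min (G (s+u) ` I) + c"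
  proof -
    fix u assume u: "u \<le> L"
    have "Min (G' u ` I') = Min (G (s+u) ` I') + c"
      unfolding G'_def by (rule Min_add_const[OF finI' neI'])
    also have "Min (G (s+u) ` I') = Min (G (s+u) ` I)" unfolding I'_def
      using noel u by (intro Min_remove[OF fin(1) i0]) auto
    finally show "Min (G' u ` I') = Min (G (s+u) ` I) + c" .
  qed
  have lam0: "lam (s+u) i0 = 0" if u: "u \<le> L" for u
  proof (rule ccontr)
    assume "lam (s+u) i0 \<noteq> 0"
    then have "G (s+u) i0 = Min (G (s+u) ` I)" using sysT_D(3)[OF S _ i0, of "s+u"] u sL by simp
    then show False using noel u by auto
  qed
  have sumI': "\<And>u f. u \<le> L \<Longrightarrow> (\<Sum>i\<in>I'. lam (s+u) i * f i) = (\<Sum>i\<in>I. lam (s+u) i * f i)"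
  proof -
    fix u and f :: "'a \<Rightarrow> real" assume u: "u \<le> L"
    have "(\<Sum>i\<in>I. lam (s+u) i * f i) = lam (s+u) i0 * f i0 + (\<Sum>i\<in>I'. lam (s+u) i * f i)"
      unfolding I'_def using fin(1) i0 by (rule sum.remove)
    then show "(\<Sum>i\<in>I'. lam (s+u) i * f i) = (\<Sum>i\<in>I. lam (s+u) i * f i)" using lam0[OF u] by simp
  qed
  have S': "sysT (Suc L) I' J a G' (\<lambda>u. F (s+u)) (\<lambda>u. lam (s+u)) (\<lambda>u. mu (s+u))"
    unfolding sysT_def
  proof (intro allI impI conjI ballI)
    fix u assume u: "u < Suc L"
    then have uL: "u \<le> L" by simp
    have su: "s + u < T" using u sL by simp
    note D = sysT_D[OF S su]
    show "\<And>i. i \<in> I' \<Longrightarrow> 0 \<le> lam (s+u) i" using D(1) unfolding I'_def by blast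
    show "sum (lam (s+u)) I' = 1" using sumI'[OF uL, of "\<lambda>_. 1"] D(2) by simp
    show "\<And>i. i \<in> I' \<Longrightarrow> lam (s+u) i \<noteq> 0 \<Longrightarrow> G' u i = Min (G' u ` I')"
      unfolding MinI'[OF uL] using D(3) unfolding I'_def G'_def by simp
    show "\<And>j. j \<in> J \<Longrightarrow> 0 \<le> mu (s+u) j" using D(4) by blast
    show "sum (mu (s+u)) J = 1" using D(5) .
    show "\<And>j. j \<in> J \<Longrightarrow> mu (s+u) j \<noteq> 0 \<Longrightarrow> F (s+u) j = Max (F (s+u) ` J)" using D(6) by blast
    show "\<And>j. j \<in> J \<Longrightarrow> F (s + Suc u) j = F (s+u) j + (\<Sum>i\<in>I'. lam (s+u) i * a i j)"
      using D(7) sumI'[OF uL] by simp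
    show "\<And>i. i \<in> I' \<Longrightarrow> G' (Suc u) i = G' u i + (\<Sum>j\<in>J. mu (s+u) j * a i j)"
      using D(8) unfolding I'_def G'_def by simp
  qed
  have g'0: "gp I' J G' (\<lambda>u. F (s+u)) 0 = 0"
    unfolding gp_def MinI'[of 0, simplified] c_def gp_def by simp
  have g'L: "gp I' J G' (\<lambda>u. F (s+u)) L = gp I J G F (s+L) - c"
    unfolding gp_def MinI'[of L, simplified] c_def by simp
  have "gp I' J G' (\<lambda>u. F (s+u)) L \<le> B L"
  proof (rule H[OF finI' fin(2) neI' fin(4) _ _ S'])
    show "card I' + card J = N'" using cI' card by simp
    show "\<forall>i\<in>I'. \<forall>j\<in>J. \<bar>a i j\<bar> \<le> A" using A unfolding I'_def by blast
  qed (use g'0 L1 in auto)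
  then show ?thesis using g'L unfolding c_def by linarith
qed

lemma remove_col:
  fixes B :: "nat \<Rightarrow> real"
  assumes H: "\<And>(I'::'a set) J' a' T' G' F' lam' mu' t'. finite I' \<Longrightarrow> finite J' \<Longrightarrow> I' \<noteq> {} \<Longrightarrow> J' \<noteq> {}
       \<Longrightarrow> card I' + card J' = N' \<Longrightarrow> (\<forall>i\<in>I'. \<forall>j\<in>J'. \<bar>a' i j\<bar> \<le> A)
       \<Longrightarrow> sysT T' I' J' a' G' F' lam' mu' \<Longrightarrow> gp I' J' G' F' 0 \<le> 0 \<Longrightarrow> 1 \<le> t' \<Longrightarrow> t' < T'
       \<Longrightarrow> gp I' J' G' F' t' \<le> B t'"
    and S: "sysT T (I::'a set) J a G F lam mu" and fin: "finite I" "finite J" "I \<noteq> {}" "J \<noteq> {}"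
    and card: "card I + card J = Suc N'" "2 \<le> card J" and j0: "j0 \<in> J"
    and A: "\<forall>i\<in>I. \<forall>j\<in>J. \<bar>a i j\<bar> \<le> A"
    and noel: "\<forall>u. s \<le> u \<and> u \<le> s + L \<longrightarrow> F u j0 \<noteq> Max (F u ` J)"
    and L1: "1 \<le> L" and sL: "s + L < T"
  shows "gp I J G F (s+L) \<le> gp I J G F s + B L"
proof -
  have A': "\<forall>i\<in>J. \<forall>j\<in>I. \<bar>- a j i\<bar> \<le> A" using A by auto
  have noel': "\<forall>u. s \<le> u \<and> u \<le> s + L \<longrightarrow> - F u j0 \<noteq> Min ((\<lambda>j. - F u j) ` J)"
    using noel Min_uminus[OF fin(2,4)] by simp
  have "gp J I (\<lambda>t j. - F t j) (\<lambda>t i. - G t i) (s+L) \<le> gp J I (\<lambda>t j. - F t j) (\<lambda>t i. - G t i) s + B L"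
    by (rule remove_row[OF H sysT_transpose[OF S fin] fin(2,1,4,3) _ card(2) j0 A' noel' L1 sL])
      (use card in auto)
  then show ?thesis using gp_transpose[OF fin] by simp
qed

lemma base_row:
  assumes S: "sysT T I J a G F lam mu" and fin: "finite I" "finite J" "I \<noteq> {}" "J \<noteq> {}"
    and c1: "card I = 1" and A: "\<forall>i\<in>I. \<forall>j\<in>J. \<bar>a i j\<bar> \<le> A" and tT: "t < T"
  shows "gp I J G F t \<le> gp I J G F 0 + 2 * A"
proof -
  obtain i0 where I: "I = {i0}" using c1 card_1_singletonE by blast
  define c where "c k = (\<Sum>j\<in>J. mu k j * a i0 j)" for k
  have cA: "\<And>k. k < T \<Longrightarrow> \<bar>c k\<bar> \<le> A"
    unfolding c_def using sysT_D(4,5)[OF S] A I fin by (intro wsum_abs_le) auto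
  have lam1: "\<And>k. k < T \<Longrightarrow> lam k i0 = 1" using sysT_D(2)[OF S] I by simp
  have Fs: "\<And>k j. k < T \<Longrightarrow> j \<in> J \<Longrightarrow> F (Suc k) j = F k j + a i0 j"
    using sysT_D(7)[OF S] lam1 I by simp
  have Gs: "\<And>k. k < T \<Longrightarrow> G (Suc k) i0 = G k i0 + c k"
    using sysT_D(8)[OF S] I unfolding c_def by simp
  have gpI: "\<And>k. gp I J G F k = Max (F k ` J) - G k i0" unfolding gp_def I by simp
  have Mx: "\<And>k. Suc k < T \<Longrightarrow> Max (F (Suc k) ` J) \<le> Max (F k ` J) + c (Suc k)"
  proof -
    fix k assume k: "Suc k < T"
    have "\<forall>j\<in>J. mu (Suc k) j * Max (F (Suc k) ` J) \<le> mu (Suc k) j * (Max (F k ` J) + a i0 j)"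
    proof
      fix j assume j: "j \<in> J"
      show "mu (Suc k) j * Max (F (Suc k) ` J) \<le> mu (Suc k) j * (Max (F k ` J) + a i0 j)"
      proof (cases "mu (Suc k) j = 0")
        case False
        then have "Max (F (Suc k) ` J) = F (Suc k) j" using sysT_D(6)[OF S k j] by simp
        also have "\<dots> = F k j + a i0 j" using Fs[of k j] k j by simp
        also have "F k j \<le> Max (F k ` J)" using j fin by (intro Max_ge) auto
        finally show ?thesis using sysT_D(4)[OF S k j] by (intro mult_left_mono) auto
      qed simp
    qed
    then have "(\<Sum>j\<in>J. mu (Suc k) j * Max (F (Suc k) ` J)) \<le> (\<Sum>j\<in>J. mu (Suc k) j * (Max (F k ` J) + a i0 j))"
      by (intro sum_mono) auto
    also have "\<dots> = sum (mu (Suc k)) J * Max (F k ` J) + c (Suc k)"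
      unfolding c_def by (simp add: distrib_left sum.distrib sum_distrib_right)
    finally show "Max (F (Suc k) ` J) \<le> Max (F k ` J) + c (Suc k)"
      using sysT_D(5)[OF S k] by (simp add: sum_distrib_right[symmetric])
  qed
  have inv: "\<And>k. k < T \<Longrightarrow> gp I J G F k - c k \<le> gp I J G F 0 - c 0"
  proof -
    fix k show "k < T \<Longrightarrow> gp I J G F k - c k \<le> gp I J G F 0 - c 0"
    proof (induction k)
      case (Suc k)
      have "Max (F (Suc k) ` J) \<le> Max (F k ` J) + c (Suc k)" using Mx Suc.prems by simp
      moreover have "G (Suc k) i0 = G k i0 + c k" using Gs Suc.prems by simp
      ultimately have "gp I J G F (Suc k) - c (Suc k) \<le> gp I J G F k - c k" unfolding gpI by linarith
      then show ?case using Suc by simp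
    qed simp
  qed
  show ?thesis using inv[OF tT] cA[OF tT] cA[of 0] tT by (simp add: abs_le_iff)
qed

lemma base_col:
  assumes S: "sysT T I J a G F lam mu" and fin: "finite I" "finite J" "I \<noteq> {}" "J \<noteq> {}"
    and c1: "card J = 1" and A: "\<forall>i\<in>I. \<forall>j\<in>J. \<bar>a i j\<bar> \<le> A" and tT: "t < T"
  shows "gp I J G F t \<le> gp I J G F 0 + 2 * A"
proof -
  have A': "\<forall>i\<in>J. \<forall>j\<in>I. \<bar>- a j i\<bar> \<le> A" using A by auto
  show ?thesis using base_row[OF sysT_transpose[OF S fin] fin(2,1,4,3) c1 A' tT] gp_transpose[OF fin] by simp
qed



lemma block:
  fixes g :: "nat \<Rightarrow> real"
  assumes L1: "1 \<le> L" and A0: "0 \<le> A" and B0: "0 \<le> B"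
    and grow: "\<And>u. u \<le> t \<Longrightarrow> g u \<le> 2 * real u * A"
    and step: "\<And>s. s + L \<le> t \<Longrightarrow> g (s + L) \<le> max (4 * real L * A) (g s + B)"
  shows "g t \<le> 4 * real L * A + real (t div L) * B"
proof -
  define r where "r = t mod L"
  have dec: "r + (t div L) * L = t" unfolding r_def by simp
  have main: "j \<le> t div L \<Longrightarrow> g (r + j * L) \<le> 4 * real L * A + real j * B" for j
  proof (induction j)
    case 0
    have "r \<le> t" unfolding r_def by simp
    have "r < L" unfolding r_def using L1 by simp
    then have "2 * real r \<le> 4 * real L" by simp
    then have "2 * real r * A \<le> 4 * real L * A" using A0 by (rule mult_right_mono)
    then have "g r \<le> 4 * real L * A" using grow[OF \<open>r \<le> t\<close>] by linarith
    then show ?case by simp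
  next
    case (Suc j)
    have "j * L + L \<le> (t div L) * L" using Suc.prems
      by (metis add.commute mult_Suc mult_le_mono1)
    then have le: "(r + j * L) + L \<le> t" using dec by linarith
    have "g (r + Suc j * L) = g ((r + j * L) + L)" by (simp add: algebra_simps)
    also have "\<dots> \<le> max (4 * real L * A) (g (r + j * L) + B)" by (rule step[OF le])
    also have "\<dots> \<le> 4 * real L * A + real (Suc j) * B"
      using Suc B0 by (simp add: algebra_simps)
    finally show ?case .
  qed
  show ?thesis using main[of "t div L"] dec by simp
qed

lemma real_bound:
  fixes t :: nat and K A al' :: real
  assumes t1: "1 \<le> t" and al0: "0 \<le> al'" and al1: "al' < 1" and K0: "K \<ge> 0" and A0: "A \<ge> 0"
  defines "be \<equiv> 1 / (2 - al')"
  defines "L \<equiv> nat \<lceil>real t powr be\<rceil>"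
  shows "1 \<le> L" and "4 * real L * A + real (t div L) * (K * A * real L powr al') \<le> (8 + K) * A * real t powr be"
proof -
  have be0: "be > 0" unfolding be_def using al1 by simp
  define x where "x = real t powr be"
  have x1: "1 \<le> x" unfolding x_def using t1 be0 by (intro ge_one_powr_ge_zero) auto
  have Lx: "real L = real_of_int \<lceil>x\<rceil>" unfolding L_def x_def[symmetric] using x1 by simp
  have xL: "x \<le> real L" unfolding Lx by simp
  have Lx2: "real L \<le> 2 * x" unfolding Lx using x1 by linarith
  show L1: "1 \<le> L" using xL x1 by linarith
  have Lpos: "0 < real L" using L1 by simp
  have "real (t div L) \<le> real t / real L" by (rule of_nat_div_le_of_nat)
  then have "real (t div L) * (K * A * real L powr al') \<le> real t / real L * (K * A * real L powr al')"
    using K0 A0 by (intro mult_right_mono) auto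
  also have "real t / real L * (K * A * real L powr al') = K * A * (real t * real L powr (al' - 1))"
    using Lpos by (simp add: powr_diff powr_one)
  also have "real L powr (al' - 1) \<le> x powr (al' - 1)"
    using x1 xL al1 by (intro powr_mono2') auto
  also have "x powr (al' - 1) = real t powr (be * (al' - 1))" unfolding x_def by (simp add: powr_powr)
  also have "real t * real t powr (be * (al' - 1)) = real t powr (1 + be * (al' - 1))"
    using t1 by (simp add: powr_add powr_one)
  also have "1 + be * (al' - 1) = be" unfolding be_def using al1 by (simp add: field_simps)
  finally have b1: "real (t div L) * (K * A * real L powr al') \<le> K * A * x"
    unfolding x_def using K0 A0 t1 by (simp add: mult_left_mono)
  have "4 * real L * A \<le> 4 * (2 * x) * A" using Lx2 A0 by (intro mult_right_mono) auto
  with b1 have "4 * real L * A + real (t div L) * (K * A * real L powr al') \<le> 8 * x * A + K * A * x" by linarith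
  then show "4 * real L * A + real (t div L) * (K * A * real L powr al') \<le> (8 + K) * A * real t powr be"
    unfolding x_def by (simp add: algebra_simps)
qed



definition al :: "nat \<Rightarrow> real" where "al N = 1 - 1 / (real N - 2)"

lemma al_nonneg: "2 \<le> N \<Longrightarrow> 0 \<le> al N"
proof -
  assume N: "2 \<le> N"
  show ?thesis
  proof (cases "N = 2")
    case True then show ?thesis unfolding al_def by simp
  next
    case False
    then have "real N - 2 \<ge> 1" using N by linarith
    then have "1 / (real N - 2) \<le> 1" by simp
    then show ?thesis unfolding al_def by simp
  qed
qed

lemma al_lt1: "3 \<le> N \<Longrightarrow> al N < 1"
  unfolding al_def by simp

lemma al_Suc: "3 \<le> N \<Longrightarrow> 1 / (2 - al N) = al (Suc N)"
proof -
  assume N: "3 \<le> N"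
  then have p: "real N - 2 > 0" by linarith
  have p2: "real N - 1 > 0" using N by linarith
  have "2 - al N = (real N - 1) / (real N - 2)" unfolding al_def using p by (simp add: field_simps)
  then have "1 / (2 - al N) = (real N - 2) / (real N - 1)" by simp
  also have "\<dots> = al (Suc N)" unfolding al_def using p2 by (simp add: field_simps)
  finally show ?thesis .
qed

lemma main_bound:
  "\<exists>K\<ge>0. \<forall>(I::'a set) J a A T G F lam mu t. finite I \<longrightarrow> finite J \<longrightarrow> I \<noteq> {} \<longrightarrow> J \<noteq> {}
     \<longrightarrow> card I + card J = N \<longrightarrow> (\<forall>i\<in>I. \<forall>j\<in>J. \<bar>a i j\<bar> \<le> A)
     \<longrightarrow> sysT T I J a G F lam mu \<longrightarrow> gp I J G F 0 \<le> 0 \<longrightarrow> 1 \<le> t \<longrightarrow> t < T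
     \<longrightarrow> gp I J G F t \<le> K * A * real t powr al N"
proof (induction N)
  case 0
  show ?case by (intro exI[of _ 0]) (simp add: card_eq_0_iff)
next
  case (Suc N')
  obtain K' where K'0: "K' \<ge> 0" and H: "\<forall>(I::'a set) J a A T G F lam mu t. finite I \<longrightarrow> finite J \<longrightarrow> I \<noteq> {} \<longrightarrow> J \<noteq> {}
     \<longrightarrow> card I + card J = N' \<longrightarrow> (\<forall>i\<in>I. \<forall>j\<in>J. \<bar>a i j\<bar> \<le> A)
     \<longrightarrow> sysT T I J a G F lam mu \<longrightarrow> gp I J G F 0 \<le> 0 \<longrightarrow> 1 \<le> t \<longrightarrow> t < T
     \<longrightarrow> gp I J G F t \<le> K' * A * real t powr al N'" using Suc.IH by blast
  define K where "K = max 2 (8 + K')"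
  show ?case
  proof (intro exI[of _ K] conjI allI impI)
    show "0 \<le> K" unfolding K_def by simp
    fix I J :: "'a set" and a A T G F lam mu and t :: nat
    assume fin: "finite I" "finite J" "I \<noteq> {}" "J \<noteq> {}" and card: "card I + card J = Suc N'"
      and A: "\<forall>i\<in>I. \<forall>j\<in>J. \<bar>a i j\<bar> \<le> A" and S: "sysT T I J a G F lam mu"
      and g0: "gp I J G F 0 \<le> 0" and t1: "1 \<le> t" and tT: "t < T"
    have A0: "0 \<le> A" using A_nonneg[OF fin(3,4) A] .
    have cI: "card I \<ge> 1" "card J \<ge> 1" using fin by (auto simp: Suc_le_eq card_gt_0_iff)
    have al0: "0 \<le> al (Suc N')" using cI card by (intro al_nonneg) linarith
    have tp: "1 \<le> real t powr al (Suc N')" using t1 al0 by (intro ge_one_powr_ge_zero) auto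
    have KA: "2 * A \<le> K * A * real t powr al (Suc N')"
    proof -
      have "2 * A \<le> K * A" unfolding K_def using A0 by (intro mult_right_mono) auto
      also have "\<dots> \<le> K * A * real t powr al (Suc N')"
        using mult_left_mono[OF tp mult_nonneg_nonneg[OF \<open>0 \<le> K\<close> A0]] by simp
      finally show ?thesis .
    qed
    show "gp I J G F t \<le> K * A * real t powr al (Suc N')"
    proof (cases "card I = 1 \<or> card J = 1")
      case True
      then have "gp I J G F t \<le> gp I J G F 0 + 2 * A"
        using base_row[OF S fin _ A tT] base_col[OF S fin _ A tT] by blast
      then show ?thesis using g0 KA by linarith
    next
      case False
      then have c2: "card I \<ge> 2" "card J \<ge> 2" using cI by auto
      have N3: "3 \<le> N'" using c2 card by linarith
      define be where "be = 1 / (2 - al N')"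
      have be: "be = al (Suc N')" unfolding be_def using al_Suc[OF N3] .
      define L where "L = nat \<lceil>real t powr be\<rceil>"
      have al'0: "0 \<le> al N'" using N3 by (intro al_nonneg) auto
      have al'1: "al N' < 1" using N3 by (rule al_lt1)
      note RB = real_bound[OF t1 al'0 al'1 K'0 A0, folded be_def, folded L_def]
      define B where "B = K' * A * real L powr al N'"
      have B0: "0 \<le> B" unfolding B_def using K'0 A0 by simp
      have H': "\<And>(I'::'a set) J' a' T' G' F' lam' mu' t'. finite I' \<Longrightarrow> finite J' \<Longrightarrow> I' \<noteq> {} \<Longrightarrow> J' \<noteq> {}
       \<Longrightarrow> card I' + card J' = N' \<Longrightarrow> (\<forall>i\<in>I'. \<forall>j\<in>J'. \<bar>a' i j\<bar> \<le> A)
       \<Longrightarrow> sysT T' I' J' a' G' F' lam' mu' \<Longrightarrow> gp I' J' G' F' 0 \<le> 0 \<Longrightarrow> 1 \<le> t' \<Longrightarrow> t' < T'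
       \<Longrightarrow> gp I' J' G' F' t' \<le> (\<lambda>t'. K' * A * real t' powr al N') t'"
        using H by blast
      have "gp I J G F t \<le> 4 * real L * A + real (t div L) * B"
      proof (rule block[OF RB(1) A0 B0])
        fix u assume "u \<le> t"
        then have "gp I J G F (0 + u) \<le> gp I J G F 0 + 2 * real u * A"
          using tT by (intro gp_grow[OF S fin A]) simp
        then show "gp I J G F u \<le> 2 * real u * A" using g0 by simp
      next
        fix s assume sL: "s + L \<le> t"
        then have sL': "s + L < T" using tT by simp
        show "gp I J G F (s + L) \<le> max (4 * real L * A) (gp I J G F s + B)"
        proof (cases "(\<forall>i\<in>I. \<exists>u. s \<le> u \<and> u \<le> s + L \<and> G u i = Min (G u ` I)) \<and>
                      (\<forall>j\<in>J. \<exists>u. s \<le> u \<and> u \<le> s + L \<and> F u j = Max (F u ` J))")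
          case True
          then have "gp I J G F (s + L) \<le> 4 * real L * A"
            using all_elig[OF S fin A _ g0] sL' by simp
          then show ?thesis by simp
        next
          case False
          then consider (r) i0 where "i0 \<in> I" "\<forall>u. s \<le> u \<and> u \<le> s + L \<longrightarrow> G u i0 \<noteq> Min (G u ` I)"
            | (c) j0 where "j0 \<in> J" "\<forall>u. s \<le> u \<and> u \<le> s + L \<longrightarrow> F u j0 \<noteq> Max (F u ` J)"
            by blast
          then have "gp I J G F (s + L) \<le> gp I J G F s + B"
          proof cases
            case r
            show ?thesis unfolding B_def
              by (rule remove_row[OF H' S fin card c2(1) r(1) A r(2) RB(1) sL'])
          next
            case c
            show ?thesis unfolding B_def
              by (rule remove_col[OF H' S fin card c2(2) c(1) A c(2) RB(1) sL'])
          qed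
          then show ?thesis by simp
        qed
      qed
      also have "\<dots> \<le> (8 + K') * A * real t powr be" unfolding B_def by (rule RB(2))
      also have "\<dots> \<le> K * A * real t powr be"
        unfolding K_def using A0 by (intro mult_right_mono) auto
      finally show ?thesis unfolding be .
    qed
  qed
qed



lemma bilin_sum_left: "bilin M (\<Sum>k\<in>A. f k) y = (\<Sum>k\<in>A. bilin M (f k) y)"
  unfolding bilin_def by (simp add: inner_sum_left)
lemma bilin_scaleR_left: "bilin M (c *\<^sub>R x) y = c * bilin M x y"
  unfolding bilin_def by simp
lemma bilin_alt: "bilin M x y = inner (x v* M) y"
  unfolding bilin_def by (simp add: dot_lmul_matrix)
lemma bilin_sum_right: "bilin M x (\<Sum>k\<in>A. f k) = (\<Sum>k\<in>A. bilin M x (f k))"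
  unfolding bilin_alt by (simp add: inner_sum_right)
lemma bilin_scaleR_right: "bilin M x (c *\<^sub>R y) = c * bilin M x y"
  unfolding bilin_alt by simp
lemma inner_transpose: "inner y (transpose M *v x) = bilin M x y"
proof -
  have e0: "x v* transpose (transpose M) = transpose M *v x" by (rule vector_transpose_matrix)
  have e: "transpose M *v x = x v* M" using e0 by (simp only: transpose_transpose)
  show ?thesis unfolding bilin_alt e by (rule inner_commute)
qed

lemma support_eq:
  fixes w f :: "'b \<Rightarrow> real"
  assumes E: "finite E" and w0: "\<And>v. v\<in>E \<Longrightarrow> 0 \<le> w v" and w1: "sum w E = 1"
    and mf: "\<And>v. v\<in>E \<Longrightarrow> m \<le> f v" and sm: "(\<Sum>v\<in>E. w v * f v) = m" and v: "v\<in>E" and wv: "w v \<noteq> 0"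
  shows "f v = m"
proof -
  have "(\<Sum>v\<in>E. w v * (f v - m)) = (\<Sum>v\<in>E. w v * f v) - sum w E * m"
    by (simp add: right_diff_distrib sum_subtractf sum_distrib_right)
  also have "\<dots> = 0" using sm w1 by simp
  finally have s0: "(\<Sum>v\<in>E. w v * (f v - m)) = 0" .
  have nn: "0 \<le> w x * (f x - m)" if x: "x \<in> E" for x
  proof -
    have "0 \<le> w x" by (rule w0[OF x])
    moreover have "0 \<le> f x - m" using mf[OF x] by simp
    ultimately show ?thesis by (rule mult_nonneg_nonneg)
  qed
  have "\<forall>x\<in>E. w x * (f x - m) = 0" using sum_nonneg_eq_0_iff[OF E nn] s0 by simp
  then have "w v * (f v - m) = 0" using v by blast
  then show ?thesis using wv by simp
qed

lemma hull_rep: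
  assumes "finite E" "y \<in> convex hull E"
  obtains u where "\<forall>x\<in>E. 0 \<le> u x" "sum u E = 1" "(\<Sum>x\<in>E. u x *\<^sub>R x) = y"
  using assms(2) unfolding convex_hull_finite[OF assms(1)] by blast



theorem corollary5:
  fixes M :: "real^'m^'n"
    and X :: "(real^'n) set" and Y :: "(real^'m) set"
    and p q :: nat
    and z s :: "nat \<Rightarrow> (real^'n) \<times> (real^'m)"
  assumes "polytope X" and "polytope Y"
    and "card {v. v extreme_point_of X} = p"
    and "card {v. v extreme_point_of Y} = q"
    and "z 0 \<in> X \<times> Y"
    and "\<And>t. s t \<in> X \<times> Y \<and>
              (\<forall>s'\<in>X \<times> Y. inner (s t) (spfw_r M (z t)) \<le> inner s' (spfw_r M (z t)))"
    and "\<And>t. z (Suc t) = (1 - 1 / (real t + 1)) *\<^sub>R z t + (1 / (real t + 1)) *\<^sub>R s t"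
  shows "(\<lambda>t. dgap M X Y (z t)) \<in> O(\<lambda>t. real t powr (- 1 / (real p + real q - 2)))"
proof -
  note polX = assms(1) and polY = assms(2) and z0 = assms(5) and sP = assms(6) and zrec = assms(7)
  define VX where "VX = {v. v extreme_point_of X}"
  define VY where "VY = {v. v extreme_point_of Y}"
  have finVX: "finite VX" unfolding VX_def using polX by (intro finite_polyhedron_extreme_points polytope_imp_polyhedron)
  have finVY: "finite VY" unfolding VY_def using polY by (intro finite_polyhedron_extreme_points polytope_imp_polyhedron)
  have XH: "X = convex hull VX" unfolding VX_def
    using polX by (intro Krein_Milman_Minkowski polytope_imp_compact polytope_imp_convex)
  have YH: "Y = convex hull VY" unfolding VY_def
    using polY by (intro Krein_Milman_Minkowski polytope_imp_compact polytope_imp_convex)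
  have VXX: "VX \<subseteq> X" unfolding VX_def extreme_point_of_def by blast
  have VYY: "VY \<subseteq> Y" unfolding VY_def extreme_point_of_def by blast
  have Xne: "X \<noteq> {}" "Y \<noteq> {}" using z0 by auto
  have neVX: "VX \<noteq> {}" using Xne(1) XH by auto
  have neVY: "VY \<noteq> {}" using Xne(2) YH by auto
  have cvXY: "convex (X \<times> Y)" using polX polY by (intro convex_Times polytope_imp_convex)
  have zin: "z t \<in> X \<times> Y" for t
  proof (induction t)
    case 0 show ?case by (rule z0)
  next
    case (Suc t)
    have "(1 - 1 / (real t + 1)) *\<^sub>R z t + (1 / (real t + 1)) *\<^sub>R s t \<in> X \<times> Y"
      using Suc sP[of t] by (intro convexD[OF cvXY]) (auto simp: field_simps)
    then show ?case using zrec[of t] by simp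
  qed
  have zs: "real t *\<^sub>R z t = (\<Sum>k<t. s k)" for t
  proof (induction t)
    case 0 show ?case by simp
  next
    case (Suc t)
    have e1: "real (Suc t) * (1 - 1 / (real t + 1)) = real t" by (simp add: field_simps)
    have e2: "real (Suc t) * (1 / (real t + 1)) = 1" by (simp add: field_simps)
    have "real (Suc t) *\<^sub>R z (Suc t) = (real (Suc t) * (1 - 1 / (real t + 1))) *\<^sub>R z t + (real (Suc t) * (1 / (real t + 1))) *\<^sub>R s t"
      unfolding zrec[of t] by (simp add: scaleR_add_right)
    also have "\<dots> = real t *\<^sub>R z t + s t" unfolding e1 e2 by simp
    also have "\<dots> = (\<Sum>k<Suc t. s k)" using Suc by simp
    finally show ?case .
  qed
  have lmoX: "bilin M (fst (s t)) (snd (z t)) \<le> bilin M x' (snd (z t))" if "x' \<in> X" for t x'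
  proof -
    have "(x', snd (s t)) \<in> X \<times> Y" using that sP[of t] by (auto simp: mem_Times_iff)
    then have "inner (s t) (spfw_r M (z t)) \<le> inner (x', snd (s t)) (spfw_r M (z t))" using sP[of t] by blast
    then have "inner (fst (s t), snd (s t)) (spfw_r M (z t)) \<le> inner (x', snd (s t)) (spfw_r M (z t))" by simp
    then show ?thesis unfolding spfw_r_def inner_Pair bilin_def by simp
  qed
  have lmoY: "bilin M (fst (z t)) y' \<le> bilin M (fst (z t)) (snd (s t))" if "y' \<in> Y" for t y'
  proof -
    have "(fst (s t), y') \<in> X \<times> Y" using that sP[of t] by (auto simp: mem_Times_iff)
    then have "inner (s t) (spfw_r M (z t)) \<le> inner (fst (s t), y') (spfw_r M (z t))" using sP[of t] by blast
    then have "inner (fst (s t), snd (s t)) (spfw_r M (z t)) \<le> inner (fst (s t), y') (spfw_r M (z t))" by simp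
    then show ?thesis unfolding spfw_r_def inner_Pair inner_minus_right inner_transpose by simp
  qed
  have exlx: "\<exists>u. (\<forall>v\<in>VX. 0 \<le> u v) \<and> sum u VX = 1 \<and> (\<Sum>v\<in>VX. u v *\<^sub>R v) = fst (s t)" for t
  proof -
    have "fst (s t) \<in> convex hull VX" using sP[of t] XH by (auto simp: mem_Times_iff)
    then show ?thesis using hull_rep[OF finVX] by metis
  qed
  have exly: "\<exists>u. (\<forall>v\<in>VY. 0 \<le> u v) \<and> sum u VY = 1 \<and> (\<Sum>v\<in>VY. u v *\<^sub>R v) = snd (s t)" for t
  proof -
    have "snd (s t) \<in> convex hull VY" using sP[of t] YH by (auto simp: mem_Times_iff)
    then show ?thesis using hull_rep[OF finVY] by metis
  qed
  define lx where "lx t = (SOME u. (\<forall>v\<in>VX. 0 \<le> u v) \<and> sum u VX = 1 \<and> (\<Sum>v\<in>VX. u v *\<^sub>R v) = fst (s t))" for t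
  define ly where "ly t = (SOME u. (\<forall>v\<in>VY. 0 \<le> u v) \<and> sum u VY = 1 \<and> (\<Sum>v\<in>VY. u v *\<^sub>R v) = snd (s t))" for t
  have lxP: "(\<forall>v\<in>VX. 0 \<le> lx t v) \<and> sum (lx t) VX = 1 \<and> (\<Sum>v\<in>VX. lx t v *\<^sub>R v) = fst (s t)" for t
    unfolding lx_def by (rule someI_ex[OF exlx])
  have lyP: "(\<forall>v\<in>VY. 0 \<le> ly t v) \<and> sum (ly t) VY = 1 \<and> (\<Sum>v\<in>VY. ly t v *\<^sub>R v) = snd (s t)" for t
    unfolding ly_def by (rule someI_ex[OF exly])
  define I :: "((real^'n) + (real^'m)) set" where "I = Inl ` VX"
  define J :: "((real^'n) + (real^'m)) set" where "J = Inr ` VY"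
  define a where "a u w = bilin M (projl u) (projr w)" for u w :: "(real^'n) + (real^'m)"
  define G where "G t u = (\<Sum>k<t. bilin M (projl u) (snd (s k)))" for t and u :: "(real^'n) + (real^'m)"
  define F where "F t w = (\<Sum>k<t. bilin M (fst (s k)) (projr w))" for t and w :: "(real^'n) + (real^'m)"
  define lam where "lam t u = lx t (projl u)" for t and u :: "(real^'n) + (real^'m)"
  define mu where "mu t w = ly t (projr w)" for t and w :: "(real^'n) + (real^'m)"
  have finI: "finite I" "finite J" "I \<noteq> {}" "J \<noteq> {}" unfolding I_def J_def using finVX finVY neVX neVY by auto
  have cardI: "card I = p" unfolding I_def using assms(3) unfolding VX_def[symmetric] by (simp add: card_image)
  have cardJ: "card J = q" unfolding J_def using assms(4) unfolding VY_def[symmetric] by (simp add: card_image)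
  have sumI: "(\<Sum>u\<in>I. f u) = (\<Sum>v\<in>VX. f (Inl v))" for f :: "_ \<Rightarrow> real"
    unfolding I_def by (simp add: sum.reindex)
  have sumJ: "(\<Sum>u\<in>J. f u) = (\<Sum>v\<in>VY. f (Inr v))" for f :: "_ \<Rightarrow> real"
    unfolding J_def by (simp add: sum.reindex)
  have Gz: "G t (Inl v) = real t * bilin M v (snd (z t))" for t v
  proof -
    have "G t (Inl v) = bilin M v (\<Sum>k<t. snd (s k))" unfolding G_def by (simp add: bilin_sum_right)
    also have "(\<Sum>k<t. snd (s k)) = snd (real t *\<^sub>R z t)" unfolding zs by (simp add: snd_sum)
    finally show ?thesis by (simp add: bilin_scaleR_right)
  qed
  have Fz: "F t (Inr w) = real t * bilin M (fst (z t)) w" for t w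
  proof -
    have "F t (Inr w) = bilin M (\<Sum>k<t. fst (s k)) w" unfolding F_def by (simp add: bilin_sum_left)
    also have "(\<Sum>k<t. fst (s k)) = fst (real t *\<^sub>R z t)" unfolding zs by (simp add: fst_sum)
    finally show ?thesis by (simp add: bilin_scaleR_left)
  qed
  have minG: "G t (Inl v) = Min (G t ` I)" if v: "v \<in> VX" and nz: "lx t v \<noteq> 0" for t v
  proof -
    define g where "g v' = bilin M v' (snd (z t))" for v'
    define m where "m = bilin M (fst (s t)) (snd (z t))"
    have mg: "\<And>v'. v' \<in> VX \<Longrightarrow> m \<le> g v'" unfolding m_def g_def using lmoX VXX by blast
    have sm: "(\<Sum>v\<in>VX. lx t v * g v) = m"
    proof -
      have "m = bilin M (\<Sum>v\<in>VX. lx t v *\<^sub>R v) (snd (z t))" unfolding m_def using lxP[of t] by simp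
      then show ?thesis unfolding g_def by (simp add: bilin_sum_left bilin_scaleR_left)
    qed
    have gv: "g v = m" using support_eq[OF finVX _ _ mg sm v nz] lxP[of t] by blast
    have le: "G t (Inl v) \<le> G t u" if "u \<in> I" for u
    proof -
      obtain v' where v': "v' \<in> VX" "u = Inl v'" using \<open>u \<in> I\<close> unfolding I_def by blast
      have "g v \<le> g v'" using gv mg[OF v'(1)] by simp
      then show ?thesis unfolding v'(2) Gz g_def by (intro mult_left_mono) auto
    qed
    show ?thesis using le finI v unfolding I_def by (intro Min_eqI[symmetric]) auto
  qed
  have maxF: "F t (Inr w) = Max (F t ` J)" if w: "w \<in> VY" and nz: "ly t w \<noteq> 0" for t w
  proof -
    define g where "g w' = - bilin M (fst (z t)) w'" for w'
    define m where "m = - bilin M (fst (z t)) (snd (s t))"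
    have mg: "\<And>w'. w' \<in> VY \<Longrightarrow> m \<le> g w'" unfolding m_def g_def using lmoY VYY by force
    have sm: "(\<Sum>w\<in>VY. ly t w * g w) = m"
    proof -
      have "m = - bilin M (fst (z t)) (\<Sum>w\<in>VY. ly t w *\<^sub>R w)" unfolding m_def using lyP[of t] by simp
      then show ?thesis unfolding g_def by (simp add: bilin_sum_right bilin_scaleR_right sum_negf)
    qed
    have gw: "g w = m" using support_eq[OF finVY _ _ mg sm w nz] lyP[of t] by blast
    have le: "F t u \<le> F t (Inr w)" if "u \<in> J" for u
    proof -
      obtain w' where w': "w' \<in> VY" "u = Inr w'" using \<open>u \<in> J\<close> unfolding J_def by blast
      have "g w \<le> g w'" using gw mg[OF w'(1)] by simp
      then show ?thesis unfolding w'(2) Fz g_def by (intro mult_left_mono) auto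
    qed
    show ?thesis using le finI w unfolding J_def by (intro Max_eqI[symmetric]) auto
  qed
  have S: "sysT T I J a G F lam mu" for T
    unfolding sysT_def
  proof (intro allI impI conjI ballI)
    fix t
    show "\<And>i. i \<in> I \<Longrightarrow> 0 \<le> lam t i" unfolding I_def lam_def using lxP[of t] by auto
    show "sum (lam t) I = 1" unfolding sumI lam_def using lxP[of t] by simp
    show "\<And>i. i \<in> I \<Longrightarrow> lam t i \<noteq> 0 \<Longrightarrow> G t i = Min (G t ` I)"
      unfolding lam_def using minG unfolding I_def by auto
    show "\<And>j. j \<in> J \<Longrightarrow> 0 \<le> mu t j" unfolding J_def mu_def using lyP[of t] by auto
    show "sum (mu t) J = 1" unfolding sumJ mu_def using lyP[of t] by simp
    show "\<And>j. j \<in> J \<Longrightarrow> mu t j \<noteq> 0 \<Longrightarrow> F t j = Max (F t ` J)"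
      unfolding mu_def using maxF unfolding J_def by auto
    show "F (Suc t) j = F t j + (\<Sum>i\<in>I. lam t i * a i j)" if "j \<in> J" for j
    proof -
      have "(\<Sum>i\<in>I. lam t i * a i j) = (\<Sum>v\<in>VX. lx t v * bilin M v (projr j))"
        unfolding sumI lam_def a_def by simp
      also have "\<dots> = bilin M (\<Sum>v\<in>VX. lx t v *\<^sub>R v) (projr j)" by (simp add: bilin_sum_left bilin_scaleR_left)
      also have "\<dots> = bilin M (fst (s t)) (projr j)" using lxP[of t] by simp
      finally show ?thesis unfolding F_def by simp
    qed
    show "G (Suc t) i = G t i + (\<Sum>j\<in>J. mu t j * a i j)" if "i \<in> I" for i
    proof -
      have "(\<Sum>j\<in>J. mu t j * a i j) = (\<Sum>w\<in>VY. ly t w * bilin M (projl i) w)"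
        unfolding sumJ mu_def a_def by simp
      also have "\<dots> = bilin M (projl i) (\<Sum>w\<in>VY. ly t w *\<^sub>R w)" by (simp add: bilin_sum_right bilin_scaleR_right)
      also have "\<dots> = bilin M (projl i) (snd (s t))" using lyP[of t] by simp
      finally show ?thesis unfolding G_def by simp
    qed
  qed
  have g0: "gp I J G F 0 \<le> 0"
  proof -
    have "F 0 ` J = {0}" "G 0 ` I = {0}" unfolding F_def G_def using finI by auto
    then show ?thesis unfolding gp_def by simp
  qed
  define A where "A = (\<Sum>i\<in>I. \<Sum>j\<in>J. \<bar>a i j\<bar>)"
  have Abd: "\<forall>i\<in>I. \<forall>j\<in>J. \<bar>a i j\<bar> \<le> A"
  proof (intro ballI)
    fix i j assume ij: "i \<in> I" "j \<in> J"
    have "\<bar>a i j\<bar> \<le> (\<Sum>j\<in>J. \<bar>a i j\<bar>)" using ij finI by (intro member_le_sum) auto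
    also have "\<dots> \<le> A" unfolding A_def using ij finI by (intro member_le_sum sum_nonneg) auto
    finally show "\<bar>a i j\<bar> \<le> A" .
  qed
  have A0: "0 \<le> A" using A_nonneg[OF finI(3,4) Abd] .
  obtain K where K0: "K \<ge> 0" and KB: "\<forall>(I::((real^'n) + (real^'m)) set) J a A T G F lam mu t. finite I \<longrightarrow> finite J \<longrightarrow> I \<noteq> {} \<longrightarrow> J \<noteq> {}
     \<longrightarrow> card I + card J = p + q \<longrightarrow> (\<forall>i\<in>I. \<forall>j\<in>J. \<bar>a i j\<bar> \<le> A)
     \<longrightarrow> sysT T I J a G F lam mu \<longrightarrow> gp I J G F 0 \<le> 0 \<longrightarrow> 1 \<le> t \<longrightarrow> t < T
     \<longrightarrow> gp I J G F t \<le> K * A * real t powr al (p + q)"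
    using main_bound by blast
  have gpb: "gp I J G F t \<le> K * A * real t powr al (p + q)" if "1 \<le> t" for t
    using KB finI cardI cardJ Abd S[of "Suc t"] g0 that by blast
  have ex: "al (p + q) - 1 = - 1 / (real p + real q - 2)" unfolding al_def by simp
  have dg: "0 \<le> dgap M X Y (z t) \<and> dgap M X Y (z t) \<le> K * A * real t powr (- 1 / (real p + real q - 2))"
    if t1: "1 \<le> t" for t
  proof -
    define xz where "xz = fst (z t)"
    define yz where "yz = snd (z t)"
    have tpos: "real t > 0" using t1 by simp
    have xzX: "xz \<in> X" and yzY: "yz \<in> Y" using zin[of t] unfolding xz_def yz_def by (auto simp: mem_Times_iff)
    have upY: "bilin M xz y \<le> Max (F t ` J) / real t" if "y \<in> Y" for y
    proof -
      obtain u where u: "\<forall>x\<in>VY. 0 \<le> u x" "sum u VY = 1" "(\<Sum>x\<in>VY. u x *\<^sub>R x) = y"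
        using hull_rep[OF finVY] \<open>y \<in> Y\<close> YH by metis
      have b: "bilin M xz w \<le> Max (F t ` J) / real t" if "w \<in> VY" for w
      proof -
        have "F t (Inr w) \<le> Max (F t ` J)" using that finI unfolding J_def by (intro Max_ge) auto
        then show ?thesis unfolding Fz xz_def[symmetric] using tpos by (simp add: field_simps)
      qed
      have "bilin M xz y = (\<Sum>w\<in>VY. u w * bilin M xz w)"
        unfolding u(3)[symmetric] by (simp add: bilin_sum_right bilin_scaleR_right)
      also have "\<dots> \<le> (\<Sum>w\<in>VY. u w * (Max (F t ` J) / real t))"
        using u(1) b by (intro sum_mono mult_left_mono) auto
      also have "\<dots> = sum u VY * (Max (F t ` J) / real t)" by (rule sum_distrib_right[symmetric])
      also have "\<dots> = Max (F t ` J) / real t" using u(2) by simp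
      finally show ?thesis .
    qed
    have loX: "Min (G t ` I) / real t \<le> bilin M x yz" if "x \<in> X" for x
    proof -
      obtain u where u: "\<forall>x\<in>VX. 0 \<le> u x" "sum u VX = 1" "(\<Sum>x\<in>VX. u x *\<^sub>R x) = x"
        using hull_rep[OF finVX] \<open>x \<in> X\<close> XH by metis
      have b: "Min (G t ` I) / real t \<le> bilin M v yz" if "v \<in> VX" for v
      proof -
        have "Min (G t ` I) \<le> G t (Inl v)" using that finI unfolding I_def by (intro Min_le) auto
        then show ?thesis unfolding Gz yz_def[symmetric] using tpos by (simp add: field_simps)
      qed
      have "bilin M x yz = (\<Sum>v\<in>VX. u v * bilin M v yz)"
        unfolding u(3)[symmetric] by (simp add: bilin_sum_left bilin_scaleR_left)
      moreover have "(\<Sum>v\<in>VX. u v * (Min (G t ` I) / real t)) \<le> (\<Sum>v\<in>VX. u v * bilin M v yz)"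
        using u(1) b by (intro sum_mono mult_left_mono) auto
      moreover have "(\<Sum>v\<in>VX. u v * (Min (G t ` I) / real t)) = sum u VX * (Min (G t ` I) / real t)"
        by (rule sum_distrib_right[symmetric])
      moreover have "sum u VX * (Min (G t ` I) / real t) = Min (G t ` I) / real t" using u(2) by simp
      ultimately show ?thesis by linarith
    qed
    have bddA: "bdd_above ((\<lambda>y. bilin M xz y) ` Y)" using upY by (intro bdd_aboveI2) 
    have bddB: "bdd_below ((\<lambda>x. bilin M x yz) ` X)" using loX by (intro bdd_belowI2)
    have sup1: "(SUP y\<in>Y. bilin M xz y) \<le> Max (F t ` J) / real t" using Xne(2) upY by (intro cSUP_least) auto
    have inf1: "(INF x\<in>X. bilin M x yz) \<ge> Min (G t ` I) / real t" using Xne(1) loX by (intro cINF_greatest) auto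
    have sup2: "bilin M xz yz \<le> (SUP y\<in>Y. bilin M xz y)" using bddA yzY by (intro cSUP_upper)
    have inf2: "(INF x\<in>X. bilin M x yz) \<le> bilin M xz yz" using bddB xzX by (intro cINF_lower)
    have dgeq: "dgap M X Y (z t) = (SUP y\<in>Y. bilin M xz y) - (INF x\<in>X. bilin M x yz)"
      unfolding dgap_def xz_def yz_def by simp
    have "dgap M X Y (z t) \<le> Max (F t ` J) / real t - Min (G t ` I) / real t" using dgeq sup1 inf1 by linarith
    also have "\<dots> = gp I J G F t / real t" unfolding gp_def by (simp add: diff_divide_distrib)
    also have "\<dots> \<le> K * A * real t powr al (p + q) / real t" using gpb[OF t1] tpos by (intro divide_right_mono) auto
    also have "\<dots> = K * A * real t powr (al (p + q) - 1)" using tpos by (simp add: powr_diff powr_one)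
    finally show ?thesis unfolding ex using dgeq sup2 inf2 by linarith
  qed
  show ?thesis
  proof (rule bigoI[where c = "K * A"])
    show "\<forall>\<^sub>F t in at_top. norm (dgap M X Y (z t)) \<le> K * A * norm (real t powr (- 1 / (real p + real q - 2)))"
      using eventually_ge_at_top[of "1::nat"]
    proof (rule eventually_mono)
      fix t :: nat assume "1 \<le> t"
      then show "norm (dgap M X Y (z t)) \<le> K * A * norm (real t powr (- 1 / (real p + real q - 2)))"
        using dg[of t] by simp
    qed
  qed
qed

end
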